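(* Let $U$ be an isometry of $\mathbb{C}^{N\times N}$ or of $\ell^2(\mathbb{N})$, $\mathbf{N}=(N_1,\dots,N_r)$, $\mathbf{M}=(M_1,\dots,M_r)$ with $1\le N_1<\dots<N_r$, $1\le M_1<\dots<M_r$, and $\mathbf{s}=(s_1,\dots,s_r)\in\mathbb{N}^r$. Then for $k,l=1,\dots,r$, $$\kappa_{\mathbf{N},\mathbf{M}}(k,l)\le\min\Big\{\mu_{\mathbf{N},\mathbf{M}}(k,l)\cdot s_l,\ \sqrt{s_l\,\mu(P^{N_{k-1}}_{N_k}U)}\cdot\|P^{N_{k-1}}_{N_k}UP^{M_{l-1}}_{M_l}\|\Big\},$$ and, in the case $U\in\mathcal{B}(\ell^2(\mathbb{N}))$, for $k=1,\dots,r$, $$\kappa_{\mathbf{N},\mathbf{M}}(k,\infty)\le\min\Big\{\mu_{\mathbf{N},\mathbf{M}}(k,\infty)\cdot s_r,\ \sqrt{s_r\,\mu(P^{N_{k-1}}_{N_k}U)}\cdot\|P^{N_{k-1}}_{N_k}UP^\perp_{M_{r-1}}\|\Big\}.$$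
   Context: $N_0=M_0=0$. $P^a_b$ projects onto $\mathrm{span}\{e_{a+1},\dots,e_b\}$, $P^\perp_K=I-P_K$ with $P_K$ the projection onto the first $K$ coordinates. $\mu(A)=\sup_{i,j}|a_{ij}|^2$. $\mu_{\mathbf{N},\mathbf{M}}(k,l)=\sqrt{\mu(P^{N_{k-1}}_{N_k}UP^{M_{l-1}}_{M_l})\mu(P^{N_{k-1}}_{N_k}U)}$, $\mu_{\mathbf{N},\mathbf{M}}(k,\infty)=\sqrt{\mu(P^{N_{k-1}}_{N_k}UP^\perp_{M_{r-1}})\mu(P^{N_{k-1}}_{N_k}U)}$. With $\Theta=\{\eta:\|\eta\|_{\ell^\infty}\le1,\ |\mathrm{supp}(P^{M_{l-1}}_{M_l}\eta)|=s_l\ (l=1,\dots,r-1),\ |\mathrm{supp}(P^\perp_{M_{r-1}}\eta)|=s_r\}$, define $\kappa_{\mathbf{N},\mathbf{M}}(k,l)=\max_{\eta\in\Theta}\|P^{N_{k-1}}_{N_k}UP^{M_{l-1}}_{M_l}\eta\|_{\ell^\infty}\sqrt{\mu(P^{N_{k-1}}_{N_k}U)}$ and $\kappa_{\mathbf{N},\mathbf{M}}(k,\infty)=\max_{\eta\in\Theta}\|P^{N_{k-1}}_{N_k}UP^\perp_{M_{r-1}}\eta\|_{\ell^\infty}\sqrt{\mu(P^{N_{k-1}}_{N_k}U)}$. *)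

theory Defs
  imports "HOL-Analysis.Analysis"
begin

text \<open>An operator U on C^n or on l^2(N) is represented by its matrix
  u i j (0-based: coordinate index a corresponds to the basis vector e_(a+1)).
  The index set D is either {..<n} (the space C^n) or UNIV (the space l^2(N));
  entries outside D x D are zero.  The projection P^a_b onto span{e_(a+1),...,e_b}
  thus corresponds to the coordinate set {a..<b}, and P^perp_K to {K..}.\<close>

definition is_isometry_matrix :: "nat set \<Rightarrow> (nat \<Rightarrow> nat \<Rightarrow> complex) \<Rightarrow> bool" where
  "is_isometry_matrix D u \<longleftrightarrow>
     (\<forall>i j. (i \<notin> D \<or> j \<notin> D) \<longrightarrow> u i j = 0) \<and>
     (\<forall>j\<in>D. \<forall>j'\<in>D. ((\<lambda>i. cnj (u i j) * u i j') has_sum (if j = j' then 1 else 0)) UNIV)"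

definition mu_sub :: "(nat \<Rightarrow> nat \<Rightarrow> complex) \<Rightarrow> nat set \<Rightarrow> nat set \<Rightarrow> real" where
  "mu_sub u R C = (SUP ij \<in> R \<times> C. (cmod (u (fst ij) (snd ij)))\<^sup>2)"

text \<open>Operator norm of P_R U P_C (R finite): supremum of the l^2 norm of P_R U P_C x
  over finitely supported x with l^2 norm at most 1 (dense in l^2).\<close>
definition op_norm_sub :: "(nat \<Rightarrow> nat \<Rightarrow> complex) \<Rightarrow> nat set \<Rightarrow> nat set \<Rightarrow> real" where
  "op_norm_sub u R C = Sup {sqrt (\<Sum>i\<in>R. (cmod (\<Sum>j\<in>{j. x j \<noteq> 0}. u i j * x j))\<^sup>2) | x.
      finite {j. x j \<noteq> 0} \<and> {j. x j \<noteq> 0} \<subseteq> C \<and> (\<Sum>j\<in>{j. x j \<noteq> 0}. (cmod (x j))\<^sup>2) \<le> 1}"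

definition Theta :: "nat set \<Rightarrow> (nat \<Rightarrow> nat) \<Rightarrow> nat \<Rightarrow> (nat \<Rightarrow> nat) \<Rightarrow> (nat \<Rightarrow> complex) set" where
  "Theta D M r s = {\<eta>. (\<forall>j. j \<notin> D \<longrightarrow> \<eta> j = 0) \<and> (\<forall>j. cmod (\<eta> j) \<le> 1) \<and>
      (\<forall>l\<in>{1..r-1}. card {j \<in> {M (l-1)..<M l}. \<eta> j \<noteq> 0} = s l) \<and>
      finite {j. M (r-1) \<le> j \<and> \<eta> j \<noteq> 0} \<and> card {j. M (r-1) \<le> j \<and> \<eta> j \<noteq> 0} = s r}"

text \<open>kappa for the row level k and column coordinate set C
  (C = {M(l-1)..<M l} gives kappa(k,l), C = {M(r-1)..} gives kappa(k,infinity)).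
  The l^infinity norm of P^{N(k-1)}_{N k} U P_C eta is a max over the finite row block.\<close>
definition kappa :: "(nat \<Rightarrow> nat \<Rightarrow> complex) \<Rightarrow> nat set \<Rightarrow> (nat \<Rightarrow> nat) \<Rightarrow> (nat \<Rightarrow> nat) \<Rightarrow> nat \<Rightarrow>
                     (nat \<Rightarrow> nat) \<Rightarrow> nat \<Rightarrow> nat set \<Rightarrow> real" where
  "kappa u D N M r s k C =
     (SUP \<eta> \<in> Theta D M r s.
        Max ((\<lambda>i. cmod (\<Sum>j\<in>{j \<in> C. \<eta> j \<noteq> 0}. u i j * \<eta> j)) ` {N (k-1)..<N k}))
     * sqrt (mu_sub u {N (k-1)..<N k} D)"

definition mu_NM :: "(nat \<Rightarrow> nat \<Rightarrow> complex) \<Rightarrow> nat set \<Rightarrow> (nat \<Rightarrow> nat) \<Rightarrow> nat \<Rightarrow> nat set \<Rightarrow> real" where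
  "mu_NM u D N k C = sqrt (mu_sub u {N (k-1)..<N k} C * mu_sub u {N (k-1)..<N k} D)"

end

theory Submission
  imports Defs
begin

lemma my_has_sum_sum:
  fixes f :: "'i \<Rightarrow> 'a \<Rightarrow> 'b::topological_comm_monoid_add"
  assumes "finite I" "\<And>i. i \<in> I \<Longrightarrow> (f i has_sum a i) A"
  shows "((\<lambda>x. \<Sum>i\<in>I. f i x) has_sum (\<Sum>i\<in>I. a i)) A"
  using assms
proof (induction I rule: finite_induct)
  case empty then show ?case by simp
next
  case (insert i I)
  then show ?case by (simp add: has_sum_add)
qed

lemma row_bound:
  assumes iso: "is_isometry_matrix D u" and fin: "finite F"
  shows "(\<Sum>j\<in>F. (cmod (u i j))\<^sup>2) \<le> 1"
proof -
  have z: "\<And>i j. i \<notin> D \<or> j \<notin> D \<Longrightarrow> u i j = 0"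
    and h: "\<And>j j'. j \<in> D \<Longrightarrow> j' \<in> D \<Longrightarrow> ((\<lambda>t. cnj (u t j) * u t j') has_sum (if j = j' then 1 else 0)) UNIV"
    using iso unfolding is_isometry_matrix_def by blast+
  define F' where "F' = F \<inter> D"
  have finF': "finite F'" using fin F'_def by simp
  have eqF: "(\<Sum>j\<in>F. (cmod (u i j))\<^sup>2) = (\<Sum>j\<in>F'. (cmod (u i j))\<^sup>2)"
    unfolding F'_def by (rule sum.mono_neutral_right) (use fin z in auto)
  define A where "A = (\<Sum>j\<in>F'. (cmod (u i j))\<^sup>2)"
  define c where "c j = cnj (u i j)" for j
  define w where "w t = (\<Sum>j\<in>F'. c j * u t j)" for t
  have hs: "((\<lambda>t. \<Sum>p\<in>F'\<times>F'. cnj (c (fst p)) * c (snd p) * (cnj (u t (fst p)) * u t (snd p)))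
     has_sum (\<Sum>p\<in>F'\<times>F'. cnj (c (fst p)) * c (snd p) * (if fst p = snd p then 1 else 0))) UNIV"
  proof (rule my_has_sum_sum[OF finite_cartesian_product[OF finF' finF']])
    fix p assume "p \<in> F'\<times>F'"
    hence "fst p \<in> D" "snd p \<in> D" unfolding F'_def by auto
    from has_sum_cmult_right[OF h[OF this], of "cnj (c (fst p)) * c (snd p)"]
    show "((\<lambda>t. cnj (c (fst p)) * c (snd p) * (cnj (u t (fst p)) * u t (snd p))) has_sum (cnj (c (fst p)) * c (snd p) * (if fst p = snd p then 1 else 0))) UNIV" .
  qed
  have e1: "(\<Sum>p\<in>F'\<times>F'. cnj (c (fst p)) * c (snd p) * (cnj (u t (fst p)) * u t (snd p))) = cnj (w t) * w t" for t
    unfolding w_def cnj_sum sum_product sum.cartesian_product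
    by (intro sum.cong refl) (auto simp: algebra_simps)
  have e2: "(\<Sum>p\<in>F'\<times>F'. cnj (c (fst p)) * c (snd p) * (if fst p = snd p then 1 else 0)) = complex_of_real A"
  proof -
    have "(\<Sum>p\<in>F'\<times>F'. cnj (c (fst p)) * c (snd p) * (if fst p = snd p then 1 else 0))
       = (\<Sum>a\<in>F'. \<Sum>b\<in>F'. cnj (c a) * c b * (if a = b then 1 else 0))"
      by (simp add: sum.cartesian_product case_prod_beta)
    also have "\<dots> = (\<Sum>a\<in>F'. cnj (c a) * c a)"
      by (intro sum.cong refl) (simp add: finF' if_distrib sum.delta cong: if_cong)
    also have "\<dots> = complex_of_real A"
      unfolding A_def c_def of_real_sum by (intro sum.cong refl) (use complex_norm_square[of "u i _", unfolded of_real_power] in simp)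
    finally show ?thesis .
  qed
  have hs2: "((\<lambda>t. (cmod (w t))\<^sup>2) has_sum A) UNIV"
  proof -
    have "((\<lambda>t. Re (cnj (w t) * w t)) has_sum Re (complex_of_real A)) UNIV"
      using has_sum_Re[OF hs[unfolded e1 e2]] .
    moreover have "Re (cnj (w t) * w t) = (cmod (w t))\<^sup>2" for t
      by (metis Re_complex_of_real complex_norm_square mult.commute)
    ultimately show ?thesis by simp
  qed
  have wi: "w i = complex_of_real A"
    unfolding w_def c_def A_def of_real_sum
    by (intro sum.cong refl) (use complex_norm_square[of "u i _", unfolded of_real_power] in \<open>simp add: mult.commute\<close>)
  have "(cmod (w i))\<^sup>2 \<le> A"
  proof -
    have "((\<lambda>t. (cmod (w t))\<^sup>2) has_sum (cmod (w i))\<^sup>2) {i}"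
      using has_sum_finite[of "{i}" "\<lambda>t. (cmod (w t))\<^sup>2"] by simp
    from has_sum_mono_neutral[OF this hs2] show ?thesis by auto
  qed
  moreover have "A \<ge> 0" unfolding A_def by (simp add: sum_nonneg)
  ultimately have "A\<^sup>2 \<le> A" using wi by simp
  moreover note \<open>A \<ge> 0\<close>
  ultimately have "A \<le> 1"
  proof -
    assume AA: "A\<^sup>2 \<le> A" and A0: "A \<ge> 0"
    show "A \<le> 1"
    proof (rule ccontr)
      assume "\<not> A \<le> 1"
      hence "A * 1 < A * A" by (intro mult_strict_left_mono) auto
      thus False using AA by (simp add: power2_eq_square)
    qed
  qed
  thus ?thesis using eqF A_def by simp
qed

lemma mu_facts:
  fixes u :: "nat \<Rightarrow> nat \<Rightarrow> complex"
  assumes ne: "R \<times> C \<noteq> {}" and ub: "\<And>i j. cmod (u i j) \<le> 1"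
  shows "0 \<le> mu_sub u R C" "\<And>i j. i \<in> R \<Longrightarrow> j \<in> C \<Longrightarrow> (cmod (u i j))\<^sup>2 \<le> mu_sub u R C"
proof -
  have bdd: "bdd_above ((\<lambda>ij. (cmod (u (fst ij) (snd ij)))\<^sup>2) ` (R \<times> C))"
    by (rule bdd_aboveI[where M=1]) (auto intro: power_le_one ub)
  show up: "(cmod (u i j))\<^sup>2 \<le> mu_sub u R C" if "i \<in> R" "j \<in> C" for i j
    unfolding mu_sub_def using cSUP_upper[OF _ bdd, of "(i,j)"] that by auto
  from ne obtain i j where "i \<in> R" "j \<in> C" by auto
  from up[OF this] show "0 \<le> mu_sub u R C" by (meson order_trans zero_le_power2)
qed

lemma op_facts:
  fixes u :: "nat \<Rightarrow> nat \<Rightarrow> complex"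
  assumes finR: "finite R"
    and row: "\<And>i F. finite F \<Longrightarrow> (\<Sum>j\<in>F. (cmod (u i j))\<^sup>2) \<le> 1"
  shows "bdd_above {sqrt (\<Sum>i\<in>R. (cmod (\<Sum>j\<in>{j. x j \<noteq> 0}. u i j * x j))\<^sup>2) | x.
      finite {j. x j \<noteq> 0} \<and> {j. x j \<noteq> 0} \<subseteq> C \<and> (\<Sum>j\<in>{j. x j \<noteq> 0}. (cmod (x j))\<^sup>2) \<le> 1}"
    and "0 \<le> op_norm_sub u R C"
proof -
  let ?S = "{sqrt (\<Sum>i\<in>R. (cmod (\<Sum>j\<in>{j. x j \<noteq> 0}. u i j * x j))\<^sup>2) | x.
      finite {j. x j \<noteq> 0} \<and> {j. x j \<noteq> 0} \<subseteq> C \<and> (\<Sum>j\<in>{j. x j \<noteq> 0}. (cmod (x j))\<^sup>2) \<le> 1}"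
  have one: "cmod (\<Sum>j\<in>F. u i j * x j) \<le> 1"
    if F: "finite F" and sx: "(\<Sum>j\<in>F. (cmod (x j))\<^sup>2) \<le> 1" for F i and x :: "nat \<Rightarrow> complex"
  proof -
    have "cmod (\<Sum>j\<in>F. u i j * x j) \<le> (\<Sum>j\<in>F. cmod (u i j) * cmod (x j))"
      by (metis (no_types, lifting) norm_mult norm_sum sum.cong)
    also have "\<dots> \<le> (\<Sum>j\<in>F. ((cmod (u i j))\<^sup>2 + (cmod (x j))\<^sup>2) / 2)"
    proof (intro sum_mono)
      fix j
      have "0 \<le> (cmod (u i j) - cmod (x j))\<^sup>2" by simp
      thus "cmod (u i j) * cmod (x j) \<le> ((cmod (u i j))\<^sup>2 + (cmod (x j))\<^sup>2) / 2"
        by (simp add: power2_diff)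
    qed
    also have "\<dots> = ((\<Sum>j\<in>F. (cmod (u i j))\<^sup>2) + (\<Sum>j\<in>F. (cmod (x j))\<^sup>2)) / 2"
      by (simp only: sum_divide_distrib[symmetric] sum.distrib)
    also have "\<dots> \<le> 1" using row[OF F, of i] sx by simp
    finally show ?thesis .
  qed
  show bdd: "bdd_above ?S"
  proof (rule bdd_aboveI[where M="sqrt (real (card R))"])
    fix v assume "v \<in> ?S"
    then obtain x where v: "v = sqrt (\<Sum>i\<in>R. (cmod (\<Sum>j\<in>{j. x j \<noteq> 0}. u i j * x j))\<^sup>2)"
      and fx: "finite {j. x j \<noteq> 0}" and sx: "(\<Sum>j\<in>{j. x j \<noteq> 0}. (cmod (x j))\<^sup>2) \<le> 1" by blast
    have "(\<Sum>i\<in>R. (cmod (\<Sum>j\<in>{j. x j \<noteq> 0}. u i j * x j))\<^sup>2) \<le> (\<Sum>i\<in>R. 1)"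
      by (intro sum_mono power_le_one norm_ge_zero one[OF fx sx])
    then show "v \<le> sqrt (real (card R))" unfolding v by simp
  qed
  have "0 \<in> ?S"
    unfolding mem_Collect_eq by (rule exI[where x="\<lambda>_. 0"]) simp
  then show "0 \<le> op_norm_sub u R C" unfolding op_norm_sub_def using cSup_upper[OF _ bdd] by blast
qed

lemma key:
  fixes u :: "nat \<Rightarrow> nat \<Rightarrow> complex"
  assumes finR: "finite R" and Rne: "R \<noteq> {}" and Cne: "C \<noteq> {}" and Dne: "D \<noteq> {}"
    and ub: "\<And>i j. cmod (u i j) \<le> 1"
    and row: "\<And>i F. finite F \<Longrightarrow> (\<Sum>j\<in>F. (cmod (u i j))\<^sup>2) \<le> 1"
    and Thne: "Th \<noteq> {}"
    and Th: "\<And>\<eta>. \<eta> \<in> Th \<Longrightarrow> finite {j\<in>C. \<eta> j \<noteq> 0} \<and> card {j\<in>C. \<eta> j \<noteq> 0} \<le> sl \<and> (\<forall>j. cmod (\<eta> j) \<le> 1)"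
  shows "(SUP \<eta>\<in>Th. Max ((\<lambda>i. cmod (\<Sum>j\<in>{j\<in>C. \<eta> j \<noteq> 0}. u i j * \<eta> j)) ` R)) * sqrt (mu_sub u R D)
     \<le> min (sqrt (mu_sub u R C * mu_sub u R D) * real sl) (sqrt (real sl * mu_sub u R D) * op_norm_sub u R C)"
proof -
  define mC where "mC = mu_sub u R C"
  define mD where "mD = mu_sub u R D"
  define op where "op = op_norm_sub u R C"
  have mC0: "0 \<le> mC" and mCu: "\<And>i j. i \<in> R \<Longrightarrow> j \<in> C \<Longrightarrow> (cmod (u i j))\<^sup>2 \<le> mC"
    using mu_facts[of R C u] Rne Cne ub unfolding mC_def by auto
  have mD0: "0 \<le> mD" using mu_facts[of R D u] Rne Dne ub unfolding mD_def by auto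
  have opbdd: "bdd_above {sqrt (\<Sum>i\<in>R. (cmod (\<Sum>j\<in>{j. x j \<noteq> 0}. u i j * x j))\<^sup>2) | x.
      finite {j. x j \<noteq> 0} \<and> {j. x j \<noteq> 0} \<subseteq> C \<and> (\<Sum>j\<in>{j. x j \<noteq> 0}. (cmod (x j))\<^sup>2) \<le> 1}"
    and op0: "0 \<le> op" using op_facts[of R u C] finR row unfolding op_def by auto
  define f where "f \<eta> = Max ((\<lambda>i. cmod (\<Sum>j\<in>{j\<in>C. \<eta> j \<noteq> 0}. u i j * \<eta> j)) ` R)" for \<eta> :: "nat \<Rightarrow> complex"
  have per: "cmod (\<Sum>j\<in>{j\<in>C. \<eta> j \<noteq> 0}. u i j * \<eta> j) \<le> real sl * sqrt mC
     \<and> cmod (\<Sum>j\<in>{j\<in>C. \<eta> j \<noteq> 0}. u i j * \<eta> j) \<le> sqrt (real sl) * op"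
    if \<eta>: "\<eta> \<in> Th" and i: "i \<in> R" for \<eta> i
  proof -
    define S where "S = {j\<in>C. \<eta> j \<noteq> 0}"
    have finS: "finite S" and cS: "card S \<le> sl" and e1: "\<And>j. cmod (\<eta> j) \<le> 1"
      using Th[OF \<eta>] unfolding S_def by auto
    have a: "cmod (\<Sum>j\<in>S. u i j * \<eta> j) \<le> real sl * sqrt mC"
    proof -
      have "cmod (\<Sum>j\<in>S. u i j * \<eta> j) \<le> (\<Sum>j\<in>S. cmod (u i j * \<eta> j))" by (rule norm_sum)
      also have "\<dots> \<le> (\<Sum>j\<in>S. sqrt mC)"
      proof (intro sum_mono)
        fix j assume "j \<in> S"
        hence "j \<in> C" unfolding S_def by auto
        hence "cmod (u i j) \<le> sqrt mC" using mCu[OF i] by (simp add: real_le_rsqrt)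
        moreover have "cmod (u i j * \<eta> j) = cmod (u i j) * cmod (\<eta> j)" by (simp add: norm_mult)
        ultimately show "cmod (u i j * \<eta> j) \<le> sqrt mC"
          using e1[of j] by (metis mult_left_le norm_ge_zero order_trans)
      qed
      also have "\<dots> = real (card S) * sqrt mC" by simp
      also have "\<dots> \<le> real sl * sqrt mC" using cS mC0 by (intro mult_right_mono) auto
      finally show ?thesis .
    qed
    have b: "cmod (\<Sum>j\<in>S. u i j * \<eta> j) \<le> sqrt (real sl) * op"
    proof (cases "S = {}")
      case True then show ?thesis using op0 by simp
    next
      case False
      define c where "c = real (card S)"
      have c0: "c > 0" unfolding c_def using False finS by (simp add: card_gt_0_iff)
      define x where "x j = (if j \<in> S then \<eta> j / complex_of_real (sqrt c) else 0)" for j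
      have sq0: "complex_of_real (sqrt c) \<noteq> 0" using c0 by simp
      have supp: "{j. x j \<noteq> 0} = S" unfolding x_def S_def using sq0 by auto
      have sx: "(\<Sum>j\<in>{j. x j \<noteq> 0}. (cmod (x j))\<^sup>2) \<le> 1"
      proof -
        have "(\<Sum>j\<in>{j. x j \<noteq> 0}. (cmod (x j))\<^sup>2) = (\<Sum>j\<in>S. (cmod (\<eta> j))\<^sup>2 / c)"
          unfolding supp by (intro sum.cong refl) (simp add: x_def norm_divide power_divide c0 less_imp_le)
        also have "\<dots> \<le> (\<Sum>j\<in>S. 1 / c)"
          by (intro sum_mono divide_right_mono power_le_one) (use e1 c0 in auto)
        also have "\<dots> = 1" using c0 by (simp add: c_def)
        finally show ?thesis .
      qed
      define v where "v = sqrt (\<Sum>i\<in>R. (cmod (\<Sum>j\<in>{j. x j \<noteq> 0}. u i j * x j))\<^sup>2)"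
      have vin: "v \<le> op" unfolding op_def op_norm_sub_def
        by (rule cSup_upper[OF _ opbdd]) (use finS supp sx S_def v_def in blast)
      have "cmod (\<Sum>j\<in>{j. x j \<noteq> 0}. u i j * x j) \<le> v"
      proof -
        have "(cmod (\<Sum>j\<in>{j. x j \<noteq> 0}. u i j * x j))\<^sup>2 \<le> (\<Sum>i\<in>R. (cmod (\<Sum>j\<in>{j. x j \<noteq> 0}. u i j * x j))\<^sup>2)"
          by (rule member_le_sum[OF i]) (auto simp: finR)
        thus ?thesis unfolding v_def by (simp add: real_le_rsqrt)
      qed
      moreover have "(\<Sum>j\<in>{j. x j \<noteq> 0}. u i j * x j) = (\<Sum>j\<in>S. u i j * \<eta> j) / complex_of_real (sqrt c)"
        unfolding supp by (simp add: x_def sum_divide_distrib)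
      ultimately have "cmod (\<Sum>j\<in>S. u i j * \<eta> j) / sqrt c \<le> op"
        using vin c0 by (simp add: norm_divide)
      hence "cmod (\<Sum>j\<in>S. u i j * \<eta> j) \<le> sqrt c * op" using c0 by (simp add: field_simps)
      also have "\<dots> \<le> sqrt (real sl) * op" using cS op0 unfolding c_def
        by (intro mult_right_mono) auto
      finally show ?thesis .
    qed
    show ?thesis using a b unfolding S_def by auto
  qed
  have fa: "f \<eta> \<le> real sl * sqrt mC" and fb: "f \<eta> \<le> sqrt (real sl) * op" if "\<eta> \<in> Th" for \<eta>
    unfolding f_def using per[OF that] finR Rne by (auto simp: Max_le_iff)
  have SA: "(SUP \<eta>\<in>Th. f \<eta>) \<le> real sl * sqrt mC" by (rule cSUP_least[OF Thne fa])
  have SB: "(SUP \<eta>\<in>Th. f \<eta>) \<le> sqrt (real sl) * op" by (rule cSUP_least[OF Thne fb])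
  have "(SUP \<eta>\<in>Th. f \<eta>) * sqrt mD \<le> sqrt (mC * mD) * real sl"
    using mult_right_mono[OF SA real_sqrt_ge_zero[OF mD0]] by (simp add: real_sqrt_mult ac_simps)
  moreover have "(SUP \<eta>\<in>Th. f \<eta>) * sqrt mD \<le> sqrt (real sl * mD) * op"
    using mult_right_mono[OF SB real_sqrt_ge_zero[OF mD0]] by (simp add: real_sqrt_mult ac_simps)
  ultimately show ?thesis unfolding f_def mC_def mD_def op_def by simp
qed

lemma mono_aux:
  fixes M :: "nat \<Rightarrow> nat"
  assumes "\<forall>l\<in>{1..r}. M (l-1) < M l"
  shows "a \<le> b \<Longrightarrow> b \<le> r \<Longrightarrow> M a \<le> M b"
proof (induction b)
  case 0 then show ?case by simp
next
  case (Suc b)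
  show ?case
  proof (cases "a = Suc b")
    case True then show ?thesis by simp
  next
    case False
    hence "M a \<le> M b" using Suc by auto
    moreover have "M b < M (Suc b)" using assms Suc.prems by (metis atLeastAtMost_iff diff_Suc_1 le_add1 plus_1_eq_Suc)
    ultimately show ?thesis by simp
  qed
qed

lemma Theta_ne:
  fixes M s :: "nat \<Rightarrow> nat"
  assumes r_pos: "r \<ge> 1"
    and M_mono: "\<forall>l\<in>{1..r}. M (l-1) < M l"
    and s_le: "\<forall>l\<in>{1..r}. s l \<le> M l - M (l-1)"
    and Dok: "\<forall>j. j < M r \<longrightarrow> j \<in> D"
  shows "Theta D M r s \<noteq> {}"
proof -
  have mono: "\<And>a b. a \<le> b \<Longrightarrow> b \<le> r \<Longrightarrow> M a \<le> M b" using mono_aux[OF M_mono] by blast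
  define B where "B l = {M (l-1)..<M (l-1) + s l}" for l
  define \<eta> where "\<eta> j = (if (\<exists>l\<in>{1..r}. j \<in> B l) then (1::complex) else 0)" for j
  have Bsub: "B l \<subseteq> {M (l-1)..<M l}" if "l \<in> {1..r}" for l
    using s_le M_mono that unfolding B_def by fastforce
  have blk: "{j \<in> {M (l-1)..<M l}. \<eta> j \<noteq> 0} = B l" if l: "l \<in> {1..r}" for l
  proof
    show "B l \<subseteq> {j \<in> {M (l-1)..<M l}. \<eta> j \<noteq> 0}" using Bsub[OF l] l unfolding \<eta>_def by auto
  next
    show "{j \<in> {M (l-1)..<M l}. \<eta> j \<noteq> 0} \<subseteq> B l"
    proof
      fix j assume j: "j \<in> {j \<in> {M (l-1)..<M l}. \<eta> j \<noteq> 0}"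
      then obtain l' where l': "l' \<in> {1..r}" "j \<in> B l'" unfolding \<eta>_def by (auto split: if_splits)
      have "l' = l"
      proof (rule ccontr)
        assume ne: "l' \<noteq> l"
        show False
        proof (cases "l' < l")
          case True
          have "j < M l'" using Bsub[OF l'(1)] l'(2) by auto
          moreover have "M l' \<le> M (l-1)" using True l by (intro mono) auto
          ultimately show False using j by auto
        next
          case False
          hence "l < l'" using ne by simp
          have "M (l'-1) \<le> j" using l'(2) unfolding B_def by auto
          moreover have "M l \<le> M (l'-1)" using \<open>l < l'\<close> l' by (intro mono) auto
          ultimately show False using j by auto
        qed
      qed
      then show "j \<in> B l" using l' by simp
    qed
  qed
  have last: "{j. M (r-1) \<le> j \<and> \<eta> j \<noteq> 0} = B r"
  proof -
    have "{j. M (r-1) \<le> j \<and> \<eta> j \<noteq> 0} = {j \<in> {M (r-1)..<M r}. \<eta> j \<noteq> 0}"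
    proof (intro set_eqI iffI)
      fix j assume j: "j \<in> {j. M (r-1) \<le> j \<and> \<eta> j \<noteq> 0}"
      then obtain l' where l': "l' \<in> {1..r}" "j \<in> B l'" unfolding \<eta>_def by (auto split: if_splits)
      have "j < M l'" using Bsub[OF l'(1)] l'(2) by auto
      moreover have "M l' \<le> M r" using l' by (intro mono) auto
      ultimately show "j \<in> {j \<in> {M (r-1)..<M r}. \<eta> j \<noteq> 0}" using j by auto
    qed auto
    also have "\<dots> = B r" using blk[of r] r_pos by auto
    finally show ?thesis .
  qed
  have "\<eta> \<in> Theta D M r s"
    unfolding Theta_def
  proof (intro CollectI conjI allI impI ballI)
    fix j assume "j \<notin> D"
    show "\<eta> j = 0"
    proof (rule ccontr)
      assume "\<eta> j \<noteq> 0"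
      then obtain l' where l': "l' \<in> {1..r}" "j \<in> B l'" unfolding \<eta>_def by (auto split: if_splits)
      have "j < M l'" using Bsub[OF l'(1)] l'(2) by auto
      moreover have "M l' \<le> M r" using l' by (intro mono) auto
      ultimately show False using Dok \<open>j \<notin> D\<close> by auto
    qed
  next
    fix j show "cmod (\<eta> j) \<le> 1" unfolding \<eta>_def by simp
  next
    fix l assume "l \<in> {1..r-1}"
    hence "l \<in> {1..r}" by auto
    show "card {j \<in> {M (l-1)..<M l}. \<eta> j \<noteq> 0} = s l" using blk[OF \<open>l \<in> {1..r}\<close>] by (simp add: B_def)
  next
    show "finite {j. M (r-1) \<le> j \<and> \<eta> j \<noteq> 0}" using last by (simp add: B_def)
    show "card {j. M (r-1) \<le> j \<and> \<eta> j \<noteq> 0} = s r" using last by (simp add: B_def)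
  qed
  thus ?thesis by blast
qed

theorem lemma7p5:
  fixes u :: "nat \<Rightarrow> nat \<Rightarrow> complex" and D :: "nat set"
    and r :: nat and N M s :: "nat \<Rightarrow> nat"
  assumes space: "D = UNIV \<or> (\<exists>n. D = {..<n})"
    and iso: "is_isometry_matrix D u"
    and r_pos: "r \<ge> 1"
    and N0: "N 0 = 0" and M0: "M 0 = 0"
    and N_mono: "\<forall>k\<in>{1..r}. N (k-1) < N k"
    and M_mono: "\<forall>l\<in>{1..r}. M (l-1) < M l"
    and fin_dim: "\<forall>n. D = {..<n} \<longrightarrow> N r \<le> n \<and> M r \<le> n"
    and s_le: "\<forall>l\<in>{1..r}. s l \<le> M l - M (l-1)"
  shows "(\<forall>k\<in>{1..r}. \<forall>l\<in>{1..r}.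
            kappa u D N M r s k {M (l-1)..<M l}
              \<le> min (mu_NM u D N k {M (l-1)..<M l} * real (s l))
                     (sqrt (real (s l) * mu_sub u {N (k-1)..<N k} D)
                        * op_norm_sub u {N (k-1)..<N k} {M (l-1)..<M l}))
       \<and> (D = UNIV \<longrightarrow> (\<forall>k\<in>{1..r}.
            kappa u D N M r s k {M (r-1)..}
              \<le> min (mu_NM u D N k {M (r-1)..} * real (s r))
                     (sqrt (real (s r) * mu_sub u {N (k-1)..<N k} D)
                        * op_norm_sub u {N (k-1)..<N k} {M (r-1)..})))"
proof -
  have row: "\<And>i F. finite F \<Longrightarrow> (\<Sum>j\<in>F. (cmod (u i j))\<^sup>2) \<le> 1"
    using row_bound[OF iso] by blast
  have ub: "cmod (u i j) \<le> 1" for i j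
  proof -
    have "(cmod (u i j))\<^sup>2 \<le> 1" using row[of "{j}" i] by simp
    thus ?thesis by (simp add: power_le_one_iff abs_le_square_iff)
  qed
  have Dok: "\<forall>j. j < M r \<longrightarrow> j \<in> D" using space fin_dim by auto
  have Dne: "D \<noteq> {}" using Dok M_mono r_pos by (metis atLeastAtMost_iff empty_iff le_refl less_nat_zero_code not_less)
  have Thne: "Theta D M r s \<noteq> {}" by (rule Theta_ne[OF r_pos M_mono s_le Dok])
  have Rne: "{N (k-1)..<N k} \<noteq> {}" if "k \<in> {1..r}" for k using N_mono that by auto
  have Th: "\<eta> \<in> Theta D M r s \<Longrightarrow> finite {j. M (r-1) \<le> j \<and> \<eta> j \<noteq> 0} \<and> card {j. M (r-1) \<le> j \<and> \<eta> j \<noteq> 0} = s r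
     \<and> (\<forall>l\<in>{1..r-1}. card {j \<in> {M (l-1)..<M l}. \<eta> j \<noteq> 0} = s l) \<and> (\<forall>j. cmod (\<eta> j) \<le> 1)" for \<eta>
    unfolding Theta_def by blast
  have part1: "kappa u D N M r s k {M (l-1)..<M l}
              \<le> min (mu_NM u D N k {M (l-1)..<M l} * real (s l))
                     (sqrt (real (s l) * mu_sub u {N (k-1)..<N k} D)
                        * op_norm_sub u {N (k-1)..<N k} {M (l-1)..<M l})"
    if k: "k \<in> {1..r}" and l: "l \<in> {1..r}" for k l
    unfolding kappa_def mu_NM_def
  proof (rule key[OF _ Rne[OF k] _ Dne ub row Thne])
    show "{M (l-1)..<M l} \<noteq> {}" using M_mono l by auto
    fix \<eta> assume e: "\<eta> \<in> Theta D M r s"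
    have "card {j \<in> {M (l-1)..<M l}. \<eta> j \<noteq> 0} \<le> s l"
    proof (cases "l = r")
      case True
      have "{j \<in> {M (l-1)..<M l}. \<eta> j \<noteq> 0} \<subseteq> {j. M (r-1) \<le> j \<and> \<eta> j \<noteq> 0}" using True by auto
      then show ?thesis using Th[OF e] True card_mono by metis
    next
      case False
      then show ?thesis using Th[OF e] l by auto
    qed
    then show "finite {j \<in> {M (l-1)..<M l}. \<eta> j \<noteq> 0} \<and> card {j \<in> {M (l-1)..<M l}. \<eta> j \<noteq> 0} \<le> s l \<and> (\<forall>j. cmod (\<eta> j) \<le> 1)"
      using Th[OF e] by auto
  qed simp
  have part2: "kappa u D N M r s k {M (r-1)..}
              \<le> min (mu_NM u D N k {M (r-1)..} * real (s r))
                     (sqrt (real (s r) * mu_sub u {N (k-1)..<N k} D)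
                        * op_norm_sub u {N (k-1)..<N k} {M (r-1)..})"
    if k: "k \<in> {1..r}" for k
    unfolding kappa_def mu_NM_def
  proof (rule key[OF _ Rne[OF k] _ Dne ub row Thne])
    fix \<eta> assume e: "\<eta> \<in> Theta D M r s"
    have "{j \<in> {M (r-1)..}. \<eta> j \<noteq> 0} = {j. M (r-1) \<le> j \<and> \<eta> j \<noteq> 0}" by auto
    then show "finite {j \<in> {M (r-1)..}. \<eta> j \<noteq> 0} \<and> card {j \<in> {M (r-1)..}. \<eta> j \<noteq> 0} \<le> s r \<and> (\<forall>j. cmod (\<eta> j) \<le> 1)"
      using Th[OF e] by auto
  qed auto
  show ?thesis using part1 part2 by blast
qed

end
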